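(* Let $A=A_1\otimes A_2$ and let $\{U_1,\dots,U_L\}$ be a $(k,\varepsilon)$-QC-extractor on $A$ with $k\le\log|A|-1$. Then $L\ge 1/\varepsilon$.
   Context: All Hilbert spaces are finite-dimensional; $\log$ is base 2; $n=\log|A|$. For $\rho_{AB}$ and $\sigma_B$ a density operator, $H_{\min}(A|B)_{\rho|\sigma}=\max\{\lambda: 2^{-\lambda}\mathbb I_A\otimes\sigma_B\ge\rho_{AB}\}$ and $H_{\min}(A|B)_\rho=\max_{\sigma_B}H_{\min}(A|B)_{\rho|\sigma}$. Fix computational bases $\{|a_1\rangle\}$ of $A_1$, $\{|a_2\rangle\}$ of $A_2$; $\mathcal T_{A\to A_1}(X)=\sum_{a_1,a_2}\langle a_1a_2|X|a_1a_2\rangle|a_1\rangle\langle a_1|$. For $k\in[-n,n]$, $\varepsilon\in[0,1]$, a $(k,\varepsilon)$-QC-extractor is a set $\{U_1,\dots,U_L\}$ of unitaries on $A$ such that for every finite-dimensional $E$ and every density operator $\rho_{AE}$ with $H_{\min}(A|E)_\rho\ge k$, $\frac1L\sum_i\|\mathcal T(U_i\rho_{AE}U_i^\dagger)-\frac{\mathbb I_{A_1}}{|A_1|}\otimes\rho_E\|_1\le\varepsilon$. *)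

theory Defs
  imports "Jordan_Normal_Form.Char_Poly"
begin

(* Operators on finite-dimensional Hilbert spaces C^d are complex d x d matrices.
   Tensor products use the Kronecker product; multi-index (a1,a2,e) of
   A1 (x) A2 (x) E is encoded as (a1 * |A2| + a2) * |E| + e. *)

definition adj :: "complex mat \<Rightarrow> complex mat" where
  "adj X = mat (dim_col X) (dim_row X) (\<lambda>(i,j). cnj (X $$ (j,i)))"

definition tr :: "complex mat \<Rightarrow> complex" where
  "tr X = (\<Sum>i<dim_row X. X $$ (i,i))"

definition kron :: "complex mat \<Rightarrow> complex mat \<Rightarrow> complex mat" where
  "kron X Y = mat (dim_row X * dim_row Y) (dim_col X * dim_col Y)
     (\<lambda>(i,j). X $$ (i div dim_row Y, j div dim_col Y) * Y $$ (i mod dim_row Y, j mod dim_col Y))"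

definition psd :: "nat \<Rightarrow> complex mat \<Rightarrow> bool" where
  "psd d M \<longleftrightarrow> M \<in> carrier_mat d d \<and>
     (\<forall>v \<in> carrier_vec d. let z = (\<Sum>i<d. \<Sum>j<d. cnj (v $ i) * M $$ (i,j) * v $ j)
                           in Im z = 0 \<and> Re z \<ge> 0)"

definition density :: "nat \<Rightarrow> complex mat \<Rightarrow> bool" where
  "density d M \<longleftrightarrow> psd d M \<and> tr M = 1"

definition unitary :: "nat \<Rightarrow> complex mat \<Rightarrow> bool" where
  "unitary d U \<longleftrightarrow> U \<in> carrier_mat d d \<and> U * adj U = 1\<^sub>m d \<and> adj U * U = 1\<^sub>m d"

(* Schatten 1-norm: sum of the singular values, i.e. of the square roots of the
   eigenvalues (with algebraic multiplicity) of X^dagger X *)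
definition trace_norm :: "complex mat \<Rightarrow> real" where
  "trace_norm X = (let p = char_poly (adj X * X) in
     (\<Sum>z \<in> {z. poly p z = 0}. real (order z p) * sqrt (Re z)))"

(* conditional min-entropy H_min(A|E)_rho for rho on A (x) E, |A| = dA, |E| = dE:
   supremum of lambda over all density sigma_E with 2^-lambda I_A (x) sigma_E >= rho *)
definition hmin :: "nat \<Rightarrow> nat \<Rightarrow> complex mat \<Rightarrow> real" where
  "hmin dA dE \<rho> = Sup {lam. \<exists>\<sigma>. density dE \<sigma> \<and>
      psd (dA * dE) (complex_of_real (2 powr (- lam)) \<cdot>\<^sub>m kron (1\<^sub>m dA) \<sigma> - \<rho>)}"

definition ptrace_A :: "nat \<Rightarrow> nat \<Rightarrow> complex mat \<Rightarrow> complex mat" where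
  "ptrace_A dA dE X = mat dE dE (\<lambda>(e,e'). \<Sum>a<dA. X $$ (a * dE + e, a * dE + e'))"

(* (T_{A -> A1} (x) id_E) X : measure A1 in the computational basis, trace out A2 *)
definition T_map :: "nat \<Rightarrow> nat \<Rightarrow> nat \<Rightarrow> complex mat \<Rightarrow> complex mat" where
  "T_map d1 d2 dE X = mat (d1 * dE) (d1 * dE) (\<lambda>(i,j).
     if i div dE = j div dE
     then (\<Sum>a2<d2. X $$ (((i div dE) * d2 + a2) * dE + i mod dE,
                          ((j div dE) * d2 + a2) * dE + j mod dE))
     else 0)"

definition qc_extractor :: "nat \<Rightarrow> nat \<Rightarrow> real \<Rightarrow> real \<Rightarrow> complex mat list \<Rightarrow> bool" where
  "qc_extractor d1 d2 k \<epsilon> Us \<longleftrightarrow>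
     (let n = log 2 (real (d1 * d2)) in - n \<le> k \<and> k \<le> n) \<and> 0 \<le> \<epsilon> \<and> \<epsilon> \<le> 1 \<and>
     Us \<noteq> [] \<and> (\<forall>U \<in> set Us. unitary (d1 * d2) U) \<and>
     (\<forall>(dE::nat) \<rho>. density (d1 * d2 * dE) \<rho> \<and> hmin (d1 * d2) dE \<rho> \<ge> k \<longrightarrow>
        (1 / real (length Us)) *
          (\<Sum>U \<leftarrow> Us. trace_norm
             (T_map d1 d2 dE (kron U (1\<^sub>m dE) * \<rho> * adj (kron U (1\<^sub>m dE)))
              - kron ((1 / of_nat d1) \<cdot>\<^sub>m 1\<^sub>m d1) (ptrace_A (d1 * d2) dE \<rho>)))
        \<le> \<epsilon>)"

end

theory Submission
  imports Defs
begin

lemma sum_lessThan_add': "(\<Sum>i<m+(n::nat). f i) = (\<Sum>i<m. f i) + (\<Sum>y<n. f (m+y)::'a::comm_monoid_add)"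
  by (induction n) (simp_all add: add.assoc)

lemma sum_split: "(\<Sum>i<(a::nat)*b. f i) = (\<Sum>x<a. \<Sum>y<b. f (x*b+y)::'a::comm_monoid_add)"
proof (induction a)
  case 0 then show ?case by simp
next
  case (Suc a)
  have "(\<Sum>i<Suc a*b. f i) = (\<Sum>i<a*b + b. f i)" by (simp add: add.commute)
  also have "\<dots> = (\<Sum>i<a*b. f i) + (\<Sum>y<b. f (a*b+y))"
    by (rule sum_lessThan_add')
  finally show ?case using Suc by simp
qed

lemma kron_carrier[simp]: "kron A B \<in> carrier_mat (dim_row A * dim_row B) (dim_col A * dim_col B)"
  by (simp add: kron_def)

lemma kron_dims[simp]: "dim_row (kron A B) = dim_row A * dim_row B" "dim_col (kron A B) = dim_col A * dim_col B"
  by (simp_all add: kron_def)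

lemma kron_index: "i < dim_row A * dim_row B \<Longrightarrow> j < dim_col A * dim_col B \<Longrightarrow>
  kron A B $$ (i,j) = A $$ (i div dim_row B, j div dim_col B) * B $$ (i mod dim_row B, j mod dim_col B)"
  by (simp add: kron_def)

lemma adj_dims[simp]: "dim_row (adj A) = dim_col A" "dim_col (adj A) = dim_row A"
  by (simp_all add: adj_def)

lemma adj_index[simp]: "i < dim_col A \<Longrightarrow> j < dim_row A \<Longrightarrow> adj A $$ (i,j) = cnj (A $$ (j,i))"
  by (simp add: adj_def)

lemma adj_carrier[simp]: "A \<in> carrier_mat n m \<Longrightarrow> adj A \<in> carrier_mat m n"
  unfolding carrier_mat_def by simp

lemma kron_mult:
  assumes A: "A \<in> carrier_mat n1 n2" and B: "B \<in> carrier_mat m1 m2"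
    and C: "C \<in> carrier_mat n2 n3" and D: "D \<in> carrier_mat m2 m3"
  shows "kron A B * kron C D = kron (A*C) (B*D)"
proof (rule eq_matI)
  show "dim_row (kron A B * kron C D) = dim_row (kron (A*C) (B*D))"
       "dim_col (kron A B * kron C D) = dim_col (kron (A*C) (B*D))"
    using A B C D by auto
  fix i j assume i: "i < dim_row (kron (A*C) (B*D))" and j: "j < dim_col (kron (A*C) (B*D))"
  have i1: "i < n1*m1" and j1: "j < n3*m3" using i j A B C D by auto
  have m1: "m1 > 0" and m3: "m3 > 0" using i1 j1 by (auto intro: gr0I)
  have id: "i div m1 < n1" "i mod m1 < m1" "j div m3 < n3" "j mod m3 < m3"
    using i1 j1 m1 m3 by (auto simp: less_mult_imp_div_less mult.commute)
  have "(kron A B * kron C D) $$ (i,j) = (\<Sum>k<n2*m2. kron A B $$ (i,k) * kron C D $$ (k,j))"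
    using A B C D i1 j1 by (simp add: scalar_prod_def sum.atLeast0_lessThan_Suc lessThan_atLeast0)
  also have "\<dots> = (\<Sum>x<n2. \<Sum>y<m2. kron A B $$ (i,x*m2+y) * kron C D $$ (x*m2+y,j))"
    by (rule sum_split)
  also have "\<dots> = (\<Sum>x<n2. \<Sum>y<m2. (A $$ (i div m1, x) * C $$ (x, j div m3)) * (B $$ (i mod m1, y) * D $$ (y, j mod m3)))"
  proof (intro sum.cong refl)
    fix x y assume x: "x \<in> {..<n2}" and y: "y \<in> {..<m2}"
    have xy: "x*m2+y < n2*m2"
    proof -
      have "x*m2+y < x*m2 + m2" using y by simp
      also have "\<dots> = (Suc x)*m2" by simp
      also have "\<dots> \<le> n2*m2" using x by (intro mult_right_mono) auto
      finally show ?thesis .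
    qed
    have m2: "m2 > 0" using y by auto
    have dm: "(x*m2+y) div m2 = x" "(x*m2+y) mod m2 = y" using y m2 by auto
    show "kron A B $$ (i,x*m2+y) * kron C D $$ (x*m2+y,j) = (A $$ (i div m1, x) * C $$ (x, j div m3)) * (B $$ (i mod m1, y) * D $$ (y, j mod m3))"
    proof -
      have "kron A B $$ (i, x*m2+y) = A $$ (i div m1, x) * B $$ (i mod m1, y)"
        using A B i1 xy y by (simp add: kron_index dm)
      moreover have "kron C D $$ (x*m2+y, j) = C $$ (x, j div m3) * D $$ (y, j mod m3)"
        using C D j1 xy y by (simp add: kron_index dm)
      ultimately show ?thesis by (simp add: mult_ac)
    qed
  qed
  also have "\<dots> = (\<Sum>x<n2. A $$ (i div m1, x) * C $$ (x, j div m3)) * (\<Sum>y<m2. B $$ (i mod m1, y) * D $$ (y, j mod m3))"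
    by (simp add: sum_product)
  also have "\<dots> = kron (A*C) (B*D) $$ (i,j)"
    using A B C D i1 j1 id by (simp add: kron_index scalar_prod_def lessThan_atLeast0)
  finally show "(kron A B * kron C D) $$ (i,j) = kron (A*C) (B*D) $$ (i,j)" .
qed

lemma adj_kron: "adj (kron A B) = kron (adj A) (adj B)"
proof (rule eq_matI)
  fix i j assume i: "i < dim_row (kron (adj A) (adj B))" and j: "j < dim_col (kron (adj A) (adj B))"
  have i1: "i < dim_col A * dim_col B" and j1: "j < dim_row A * dim_row B" using i j by auto
  have cb: "dim_col B > 0" and rb: "dim_row B > 0" using i1 j1 by (auto intro: gr0I)
  have id: "i div dim_col B < dim_col A" "i mod dim_col B < dim_col B" "j div dim_row B < dim_row A" "j mod dim_row B < dim_row B"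
    using i1 j1 cb rb by (auto simp: less_mult_imp_div_less mult.commute)
  show "adj (kron A B) $$ (i,j) = kron (adj A) (adj B) $$ (i,j)"
    using i1 j1 id by (simp add: kron_index)
qed auto

lemma adj_one[simp]: "adj (1\<^sub>m n) = 1\<^sub>m n"
  by (rule eq_matI) auto

lemma kron_one: "kron (1\<^sub>m n) (1\<^sub>m m) = 1\<^sub>m (n*m)"
proof (rule eq_matI)
  fix i j assume i: "i < dim_row (1\<^sub>m (n*m))" and j: "j < dim_col (1\<^sub>m (n*m))"
  have i1: "i < n*m" and j1: "j < n*m" using i j by auto
  have m: "m > 0" using i1 by (auto intro: gr0I)
  have id: "i div m < n" "j div m < n" "i mod m < m" "j mod m < m"
    using i1 j1 m by (auto simp: less_mult_imp_div_less mult.commute)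
  have e: "kron (1\<^sub>m n) (1\<^sub>m m) $$ (i,j) = 1\<^sub>m n $$ (i div m, j div m) * 1\<^sub>m m $$ (i mod m, j mod m)"
    using i1 j1 by (simp add: kron_index)
  show "kron (1\<^sub>m n) (1\<^sub>m m) $$ (i,j) = 1\<^sub>m (n*m) $$ (i,j)"
  proof (cases "i = j")
    case True then show ?thesis using i1 id e by simp
  next
    case False
    have "i div m \<noteq> j div m \<or> i mod m \<noteq> j mod m"
    proof (rule ccontr)
      assume "\<not> (i div m \<noteq> j div m \<or> i mod m \<noteq> j mod m)"
      then have "i div m * m + i mod m = j div m * m + j mod m" by simp
      then show False using False by simp
    qed
    then show ?thesis using i1 j1 id False e by (simp add: index_one_mat)
  qed
qed auto

definition qf :: "nat \<Rightarrow> complex mat \<Rightarrow> complex vec \<Rightarrow> complex" where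
  "qf d M v = (\<Sum>i<d. \<Sum>j<d. cnj (v $ i) * M $$ (i,j) * v $ j)"

lemma psd_qf: "psd d M \<longleftrightarrow> M \<in> carrier_mat d d \<and> (\<forall>v\<in>carrier_vec d. Im (qf d M v) = 0 \<and> Re (qf d M v) \<ge> 0)"
  by (simp add: psd_def qf_def Let_def)

lemma mv_index: "M \<in> carrier_mat d d \<Longrightarrow> v \<in> carrier_vec d \<Longrightarrow> i < d \<Longrightarrow> (M *\<^sub>v v) $ i = (\<Sum>j<d. M $$ (i,j) * v $ j)"
  by (auto simp: scalar_prod_def lessThan_atLeast0 intro!: sum.cong)

lemma qf_mv: assumes M: "M \<in> carrier_mat d d" and v: "v \<in> carrier_vec d"
  shows "qf d M v = (\<Sum>i<d. cnj (v$i) * (M *\<^sub>v v) $ i)"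
  unfolding qf_def by (intro sum.cong refl) (simp add: mv_index[OF M v] sum_distrib_left mult.assoc)

lemma adj_mv: assumes W: "W \<in> carrier_mat n n" and u: "u \<in> carrier_vec n" and v: "v \<in> carrier_vec n"
  shows "(\<Sum>i<n. cnj (v$i) * (adj W *\<^sub>v u)$i) = (\<Sum>l<n. cnj ((W *\<^sub>v v)$l) * u$l)"
proof -
  have aW: "adj W \<in> carrier_mat n n" using W by simp
  have "(\<Sum>i<n. cnj (v$i) * (adj W *\<^sub>v u)$i) = (\<Sum>i<n. \<Sum>l<n. cnj (v$i) * cnj (W $$ (l,i)) * u$l)"
  proof (intro sum.cong refl)
    fix i assume i: "i \<in> {..<n}"
    have "(adj W *\<^sub>v u)$i = (\<Sum>l<n. adj W $$ (i,l) * u$l)" using i by (intro mv_index[OF aW u]) auto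
    also have "\<dots> = (\<Sum>l<n. cnj (W $$ (l,i)) * u$l)" using i W by (intro sum.cong refl) auto
    finally show "cnj (v$i) * (adj W *\<^sub>v u)$i = (\<Sum>l<n. cnj (v$i) * cnj (W $$ (l,i)) * u$l)"
      by (simp add: sum_distrib_left mult.assoc)
  qed
  also have "\<dots> = (\<Sum>l<n. \<Sum>i<n. cnj (v$i) * cnj (W $$ (l,i)) * u$l)"
    by (rule sum.swap)
  also have "\<dots> = (\<Sum>l<n. cnj ((W *\<^sub>v v)$l) * u$l)"
    by (intro sum.cong refl) (simp add: mv_index[OF W v] sum_distrib_right sum_distrib_left mult_ac)
  finally show ?thesis .
qed

lemma qf_conj: assumes M: "M \<in> carrier_mat d d" and W: "W \<in> carrier_mat d d" and v: "v \<in> carrier_vec d"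
  shows "qf d (adj W * M * W) v = qf d M (W *\<^sub>v v)"
proof -
  have aW: "adj W \<in> carrier_mat d d" using W by simp
  have Wv: "W *\<^sub>v v \<in> carrier_vec d" using W v by simp
  have e: "(adj W * M * W) *\<^sub>v v = adj W *\<^sub>v (M *\<^sub>v (W *\<^sub>v v))"
  proof -
    have "(adj W * M * W) *\<^sub>v v = (adj W * M) *\<^sub>v (W *\<^sub>v v)"
      using aW M W v by (intro assoc_mult_mat_vec[of _ d d _ d]) auto
    also have "\<dots> = adj W *\<^sub>v (M *\<^sub>v (W *\<^sub>v v))"
      using aW M Wv by (intro assoc_mult_mat_vec[of _ d d _ d]) auto
    finally show ?thesis .
  qed
  have "qf d (adj W * M * W) v = (\<Sum>i<d. cnj (v$i) * (adj W *\<^sub>v (M *\<^sub>v (W *\<^sub>v v))) $ i)"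
    using aW M W v by (subst qf_mv[of _ d]) (auto simp: e)
  also have "\<dots> = (\<Sum>l<d. cnj ((W *\<^sub>v v)$l) * (M *\<^sub>v (W *\<^sub>v v))$l)"
    using M Wv v by (intro adj_mv[OF W]) auto
  also have "\<dots> = qf d M (W *\<^sub>v v)" using qf_mv[OF M Wv] by simp
  finally show ?thesis .
qed

lemma psd_conj: assumes "psd d M" and W: "W \<in> carrier_mat d d"
  shows "psd d (adj W * M * W)"
proof -
  have M: "M \<in> carrier_mat d d" using assms by (simp add: psd_def)
  show ?thesis unfolding psd_qf
  proof (intro conjI ballI)
    show "adj W * M * W \<in> carrier_mat d d" using M W by auto
    fix v :: "complex vec" assume v: "v \<in> carrier_vec d"
    have "W *\<^sub>v v \<in> carrier_vec d" using W v by simp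
    then show "Im (qf d (adj W * M * W) v) = 0" "Re (qf d (adj W * M * W) v) \<ge> 0"
      using assms(1) unfolding psd_qf qf_conj[OF M W v] by auto
  qed
qed

lemma tr_comm: assumes A: "A \<in> carrier_mat n m" and B: "B \<in> carrier_mat m n"
  shows "tr (A * B) = tr (B * A)"
proof -
  have "tr (A * B) = (\<Sum>i<n. \<Sum>k<m. A $$ (i,k) * B $$ (k,i))"
    using A B unfolding tr_def by (intro sum.cong) (auto simp: scalar_prod_def lessThan_atLeast0 intro!: sum.cong)
  also have "\<dots> = (\<Sum>k<m. \<Sum>i<n. B $$ (k,i) * A $$ (i,k))"
    by (subst sum.swap) (simp add: mult.commute)
  also have "\<dots> = tr (B * A)"
    using A B unfolding tr_def by (intro sum.cong) (auto simp: scalar_prod_def lessThan_atLeast0 intro!: sum.cong)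
  finally show ?thesis .
qed

lemma qf_unit: assumes "M \<in> carrier_mat d d" "k < d" shows "qf d M (unit_vec d k) = M $$ (k,k)"
proof -
  have "qf d M (unit_vec d k) = (\<Sum>i<d. if i = k then M $$ (k,k) else 0)"
    unfolding qf_def using assms by (intro sum.cong refl) (auto simp: unit_vec_def if_distrib sum.delta' cong: if_cong)
  also have "\<dots> = M $$ (k,k)" using assms by simp
  finally show ?thesis .
qed

lemma psd_diag: assumes "psd d M" "k < d" shows "Re (M $$ (k,k)) \<ge> 0"
proof -
  have M: "M \<in> carrier_mat d d" using assms by (simp add: psd_def)
  have "unit_vec d k \<in> carrier_vec d" by simp
  then have "Re (qf d M (unit_vec d k)) \<ge> 0" using assms(1) unfolding psd_qf by blast
  then show ?thesis unfolding qf_unit[OF M assms(2)] .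
qed

lemma psd_tr: assumes "psd d M" shows "Re (tr M) \<ge> 0"
proof -
  have M: "M \<in> carrier_mat d d" using assms by (simp add: psd_def)
  have "Re (tr M) = (\<Sum>i<d. Re (M $$ (i,i)))" using M by (simp add: tr_def Re_sum)
  also have "\<dots> \<ge> 0" using psd_diag[OF assms] by (intro sum_nonneg) auto
  finally show ?thesis .
qed

lemma tr_minus: "A \<in> carrier_mat d d \<Longrightarrow> B \<in> carrier_mat d d \<Longrightarrow> tr (A - B) = tr A - tr B"
  by (simp add: tr_def sum_subtractf)

lemma tr_smult: "A \<in> carrier_mat d d \<Longrightarrow> tr (c \<cdot>\<^sub>m A) = c * tr A"
  unfolding tr_def sum_distrib_left by (intro sum.cong) auto

lemma tr_kron_one: assumes "\<sigma> \<in> carrier_mat dE dE" shows "tr (kron (1\<^sub>m dA) \<sigma>) = of_nat dA * tr \<sigma>"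
proof -
  have "tr (kron (1\<^sub>m dA) \<sigma>) = (\<Sum>i<dA*dE. kron (1\<^sub>m dA) \<sigma> $$ (i,i))" using assms by (simp add: tr_def)
  also have "\<dots> = (\<Sum>x<dA. \<Sum>y<dE. kron (1\<^sub>m dA) \<sigma> $$ (x*dE+y,x*dE+y))" by (rule sum_split)
  also have "\<dots> = (\<Sum>x<dA. \<Sum>y<dE. \<sigma> $$ (y,y))"
  proof (intro sum.cong refl)
    fix x y assume x: "x \<in> {..<dA}" and y: "y \<in> {..<dE}"
    have xy: "x*dE+y < dA*dE"
    proof -
      have "x*dE+y < x*dE + dE" using y by simp
      also have "\<dots> = (Suc x)*dE" by simp
      also have "\<dots> \<le> dA*dE" using x by (intro mult_right_mono) auto
      finally show ?thesis .
    qed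
    show "kron (1\<^sub>m dA) \<sigma> $$ (x*dE+y,x*dE+y) = \<sigma> $$ (y,y)"
      using assms xy x y by (simp add: kron_index)
  qed
  also have "\<dots> = of_nat dA * tr \<sigma>" using assms by (simp add: tr_def)
  finally show ?thesis .
qed

lemma adj_mv_gen: assumes W: "W \<in> carrier_mat m n" and u: "u \<in> carrier_vec m" and v: "v \<in> carrier_vec n"
  shows "(\<Sum>i<n. cnj (v$i) * (adj W *\<^sub>v u)$i) = (\<Sum>l<m. cnj ((W *\<^sub>v v)$l) * u$l)"
proof -
  have aW: "adj W \<in> carrier_mat n m" using W by simp
  have mv: "\<And>M w i. M \<in> carrier_mat a b \<Longrightarrow> w \<in> carrier_vec b \<Longrightarrow> i < a \<Longrightarrow> (M *\<^sub>v w) $ i = (\<Sum>j<b. M $$ (i,j) * w $ j)" for a b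
    by (auto simp: scalar_prod_def lessThan_atLeast0 intro!: sum.cong)
  have "(\<Sum>i<n. cnj (v$i) * (adj W *\<^sub>v u)$i) = (\<Sum>i<n. \<Sum>l<m. cnj (v$i) * cnj (W $$ (l,i)) * u$l)"
  proof (intro sum.cong refl)
    fix i assume i: "i \<in> {..<n}"
    have "(adj W *\<^sub>v u)$i = (\<Sum>l<m. adj W $$ (i,l) * u$l)" using i by (intro mv[OF aW u]) auto
    also have "\<dots> = (\<Sum>l<m. cnj (W $$ (l,i)) * u$l)" using i W by (intro sum.cong refl) auto
    finally show "cnj (v$i) * (adj W *\<^sub>v u)$i = (\<Sum>l<m. cnj (v$i) * cnj (W $$ (l,i)) * u$l)"
      by (simp add: sum_distrib_left mult.assoc)
  qed
  also have "\<dots> = (\<Sum>l<m. \<Sum>i<n. cnj (v$i) * cnj (W $$ (l,i)) * u$l)"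
    by (rule sum.swap)
  also have "\<dots> = (\<Sum>l<m. cnj ((W *\<^sub>v v)$l) * u$l)"
    by (intro sum.cong refl) (simp add: mv[OF W v] sum_distrib_right sum_distrib_left mult_ac)
  finally show ?thesis .
qed

lemma cnj_mult_self: "cnj a * a = complex_of_real ((cmod a)\<^sup>2)"
  by (metis complex_norm_square mult.commute)

lemma eig_nonneg:
  assumes X: "X \<in> carrier_mat m n" and root: "poly (char_poly (adj X * X)) z = 0"
  shows "Re z \<ge> 0"
proof -
  have B: "adj X * X \<in> carrier_mat n n" using X by auto
  have "eigenvalue (adj X * X) z" using eigenvalue_root_char_poly[OF B] root by simp
  then obtain v where ev: "eigenvector (adj X * X) v z" unfolding eigenvalue_def by blast
  have v: "v \<in> carrier_vec n" and v0: "v \<noteq> 0\<^sub>v n" and eq: "(adj X * X) *\<^sub>v v = z \<cdot>\<^sub>v v"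
    using ev B unfolding eigenvector_def by auto
  have Xv: "X *\<^sub>v v \<in> carrier_vec m" using X v by simp
  have "(adj X * X) *\<^sub>v v = adj X *\<^sub>v (X *\<^sub>v v)"
    using X v by (intro assoc_mult_mat_vec[of _ n m _ n]) auto
  then have "(\<Sum>i<n. cnj (v$i) * ((adj X * X) *\<^sub>v v)$i) = (\<Sum>l<m. cnj ((X *\<^sub>v v)$l) * (X *\<^sub>v v)$l)"
    using adj_mv_gen[OF X Xv v] by simp
  also have "\<dots> = complex_of_real (\<Sum>l<m. (cmod ((X *\<^sub>v v)$l))\<^sup>2)"
    by (simp add: cnj_mult_self)
  finally have L: "(\<Sum>i<n. cnj (v$i) * ((adj X * X) *\<^sub>v v)$i) = complex_of_real (\<Sum>l<m. (cmod ((X *\<^sub>v v)$l))\<^sup>2)" .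
  have "(\<Sum>i<n. cnj (v$i) * ((adj X * X) *\<^sub>v v)$i) = (\<Sum>i<n. z * (cnj (v$i) * v$i))"
    using eq v by (intro sum.cong refl) (auto simp: mult_ac)
  also have "\<dots> = z * complex_of_real (\<Sum>i<n. (cmod (v$i))\<^sup>2)"
    by (simp add: sum_distrib_left cnj_mult_self)
  finally have R: "z * complex_of_real (\<Sum>i<n. (cmod (v$i))\<^sup>2) = complex_of_real (\<Sum>l<m. (cmod ((X *\<^sub>v v)$l))\<^sup>2)"
    using L by simp
  obtain k where k: "k < n" "v $ k \<noteq> 0" using v v0 by (metis carrier_vecD index_zero_vec(1) eq_vecI index_zero_vec(2))
  have s: "(\<Sum>i<n. (cmod (v$i))\<^sup>2) > 0"
  proof -
    have "(cmod (v$k))\<^sup>2 \<le> (\<Sum>i<n. (cmod (v$i))\<^sup>2)" using k by (intro member_le_sum) auto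
    moreover have "(cmod (v$k))\<^sup>2 > 0" using k by simp
    ultimately show ?thesis by linarith
  qed
  have t: "(\<Sum>l<m. (cmod ((X *\<^sub>v v)$l))\<^sup>2) \<ge> 0" by (intro sum_nonneg) auto
  have "Re z * (\<Sum>i<n. (cmod (v$i))\<^sup>2) = (\<Sum>l<m. (cmod ((X *\<^sub>v v)$l))\<^sup>2)"
    using arg_cong[OF R, of Re] by simp
  then show ?thesis using s t by (metis zero_le_mult_iff not_less)
qed

lemma trace_norm_nonneg: "trace_norm X \<ge> 0"
proof -
  have X: "X \<in> carrier_mat (dim_row X) (dim_col X)" by simp
  show ?thesis unfolding trace_norm_def Let_def
    using eig_nonneg[OF X] by (intro sum_nonneg) auto
qed

lemma trace_norm_scalar:
  assumes X: "X \<in> carrier_mat m n" and n: "n > 0" and c: "c \<ge> 0"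
    and e: "adj X * X = complex_of_real c \<cdot>\<^sub>m 1\<^sub>m n"
  shows "trace_norm X = real n * sqrt c"
proof -
  let ?A = "complex_of_real c \<cdot>\<^sub>m 1\<^sub>m n"
  have A: "?A \<in> carrier_mat n n" by simp
  have ut: "upper_triangular ?A" unfolding upper_triangular_def by auto
  have "char_poly ?A = (\<Prod>a\<leftarrow>diag_mat ?A. [:- a, 1:])"
    by (rule char_poly_upper_triangular[OF A ut])
  also have "diag_mat ?A = replicate n (complex_of_real c)"
    by (rule nth_equalityI) (auto simp: diag_mat_def)
  also have "(\<Prod>a\<leftarrow>replicate n (complex_of_real c). [:- a, 1:]) = [:- complex_of_real c, 1:] ^ n"
    by (simp add: prod_list_replicate)
  finally have cp: "char_poly (adj X * X) = [:- complex_of_real c, 1:] ^ n" using e by simp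
  have roots: "{z. poly ([:- complex_of_real c, 1:] ^ n) z = 0} = {complex_of_real c}"
    using n by auto
  show ?thesis unfolding trace_norm_def Let_def cp roots
    using c by (simp add: order_power_n_n)
qed

definition blk :: "nat \<Rightarrow> (nat \<Rightarrow> nat \<Rightarrow> nat \<Rightarrow> complex) \<Rightarrow> complex mat" where
  "blk N B = mat (N*2) (N*2) (\<lambda>(i,j). if i div 2 = j div 2 then B (i div 2) (i mod 2) (j mod 2) else 0)"

lemma blk_carrier[simp]: "blk N B \<in> carrier_mat (N*2) (N*2)"
  by (simp add: blk_def)

lemma blk_dims[simp]: "dim_row (blk N B) = N*2" "dim_col (blk N B) = N*2"
  by (simp_all add: blk_def)

lemma blk_index: "i < N*2 \<Longrightarrow> j < N*2 \<Longrightarrow>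
   blk N B $$ (i,j) = (if i div 2 = j div 2 then B (i div 2) (i mod 2) (j mod 2) else 0)"
  by (simp add: blk_def)

lemma sum2: "(\<Sum>s<(2::nat). f s) = f 0 + (f 1::'a::comm_monoid_add)"
  by (simp add: numeral_2_eq_2)

lemma idx2: "r < 2 \<Longrightarrow> (a*2+r) div 2 = a" "r < 2 \<Longrightarrow> (a*2+(r::nat)) mod 2 = r"
  by auto

lemma idx3[simp]: "Suc (a*2) mod 2 = 1" "Suc (a*2) div 2 = a" "(a*2) mod 2 = 0" "(a*2) div 2 = (a::nat)"
  by presburger+

lemma idx_lt: "a < N \<Longrightarrow> r < 2 \<Longrightarrow> a*2+r < N*(2::nat)"
  by linarith

lemma blk_cong: assumes "\<And>a r s. a < N \<Longrightarrow> r < 2 \<Longrightarrow> s < 2 \<Longrightarrow> B a r s = C a r s"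
  shows "blk N B = blk N C"
proof (rule eq_matI)
  fix i j assume i: "i < dim_row (blk N C)" and j: "j < dim_col (blk N C)"
  then have "i div 2 < N" "i mod 2 < 2" "j mod 2 < 2" by auto
  then show "blk N B $$ (i,j) = blk N C $$ (i,j)" using i j assms by (simp add: blk_index)
qed auto

lemma blk_minus: "blk N B - blk N C = blk N (\<lambda>a r s. B a r s - C a r s)"
  by (rule eq_matI) (auto simp: blk_index)

lemma blk_smult_one: "c \<cdot>\<^sub>m 1\<^sub>m (N*2) = blk N (\<lambda>a r s. if r = s then c else 0)"
proof (rule eq_matI)
  fix i j assume i: "i < dim_row (blk N (\<lambda>a r s. if r = s then c else 0))" and j: "j < dim_col (blk N (\<lambda>a r s. if r = s then c else 0))"
  have "(i = j) = (i div 2 = j div 2 \<and> i mod 2 = j mod 2)"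
    by (metis div_mult_mod_eq)
  then show "(c \<cdot>\<^sub>m 1\<^sub>m (N*2)) $$ (i,j) = blk N (\<lambda>a r s. if r = s then c else 0) $$ (i,j)"
    using i j by (auto simp: blk_index)
qed auto

lemma blk_row_sum:
  assumes a: "a < N" and r: "r < 2" and f0: "\<And>j. f 0 j = 0"
  shows "(\<Sum>j<N*2. f (blk N B $$ (a*2+r, j)) j) = (\<Sum>s<2. f (B a r s) (a*2+s))"
proof -
  have "(\<Sum>j<N*2. f (blk N B $$ (a*2+r, j)) j) = (\<Sum>b<N. \<Sum>s<2. f (blk N B $$ (a*2+r, b*2+s)) (b*2+s))"
    by (rule sum_split)
  also have "\<dots> = (\<Sum>b<N. (if b = a then (\<Sum>s<2. f (B a r s) (a*2+s)) else 0))"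
  proof (intro sum.cong refl)
    fix b assume b: "b \<in> {..<N}"
    show "(\<Sum>s<2. f (blk N B $$ (a*2+r, b*2+s)) (b*2+s)) = (if b = a then (\<Sum>s<2. f (B a r s) (a*2+s)) else 0)"
      using a b r f0 by (cases "b = a") (auto simp: blk_index sum2 idx_lt)
  qed
  also have "\<dots> = (\<Sum>s<2. f (B a r s) (a*2+s))"
    using a by simp
  finally show ?thesis .
qed

lemma qf_blk: "qf (N*2) (blk N B) v = (\<Sum>a<N. \<Sum>r<2. \<Sum>s<2. cnj (v $ (a*2+r)) * B a r s * v $ (a*2+s))"
proof -
  have "qf (N*2) (blk N B) v = (\<Sum>a<N. \<Sum>r<2. \<Sum>j<N*2. cnj (v $ (a*2+r)) * blk N B $$ (a*2+r, j) * v $ j)"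
    unfolding qf_def by (rule sum_split)
  also have "\<dots> = (\<Sum>a<N. \<Sum>r<2. \<Sum>s<2. cnj (v $ (a*2+r)) * B a r s * v $ (a*2+s))"
    apply (rule sum.cong[OF refl])
    apply (rule sum.cong[OF refl])
    subgoal for a r using blk_row_sum[of a N r "\<lambda>x j. cnj (v $ (a*2+r)) * x * v $ j" B] by simp
    done
  finally show ?thesis .
qed

lemma blk_adj_mult: "adj (blk N B) * blk N B = blk N (\<lambda>a r s. \<Sum>y<2. cnj (B a y r) * B a y s)"
proof (rule eq_matI)
  fix i j assume i: "i < dim_row (blk N (\<lambda>a r s. \<Sum>y<2. cnj (B a y r) * B a y s))" and j: "j < dim_col (blk N (\<lambda>a r s. \<Sum>y<2. cnj (B a y r) * B a y s))"
  have i1: "i < N*2" and j1: "j < N*2" using i j by auto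
  have "(adj (blk N B) * blk N B) $$ (i,j) = (\<Sum>k<N*2. cnj (blk N B $$ (k,i)) * blk N B $$ (k,j))"
    using i1 j1 by (auto simp: scalar_prod_def lessThan_atLeast0 intro!: sum.cong)
  also have "\<dots> = (\<Sum>x<N. \<Sum>y<2. cnj (blk N B $$ (x*2+y,i)) * blk N B $$ (x*2+y,j))"
    by (rule sum_split)
  also have "\<dots> = (\<Sum>x<N. if i div 2 = j div 2 \<and> x = i div 2 then (\<Sum>y<2. cnj (B x y (i mod 2)) * B x y (j mod 2)) else 0)"
  proof (intro sum.cong refl)
    fix x assume x: "x \<in> {..<N}"
    show "(\<Sum>y<2. cnj (blk N B $$ (x*2+y,i)) * blk N B $$ (x*2+y,j)) = (if i div 2 = j div 2 \<and> x = i div 2 then (\<Sum>y<2. cnj (B x y (i mod 2)) * B x y (j mod 2)) else 0)"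
      using x i1 j1 by (auto simp: blk_index sum2 idx_lt)
  qed
  also have "\<dots> = blk N (\<lambda>a r s. \<Sum>y<2. cnj (B a y r) * B a y s) $$ (i,j)"
    using i1 j1 by (auto simp: blk_index)
  finally show "(adj (blk N B) * blk N B) $$ (i,j) = blk N (\<lambda>a r s. \<Sum>y<2. cnj (B a y r) * B a y s) $$ (i,j)" .
qed auto

lemma psd_blk:
  assumes "\<And>a x y. a < N \<Longrightarrow> Im (cnj x * B a 0 0 * x + cnj x * B a 0 1 * y + cnj y * B a 1 0 * x + cnj y * B a 1 1 * y) = 0
       \<and> Re (cnj x * B a 0 0 * x + cnj x * B a 0 1 * y + cnj y * B a 1 0 * x + cnj y * B a 1 1 * y) \<ge> 0"
  shows "psd (N*2) (blk N B)"
  unfolding psd_qf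
proof (intro conjI ballI)
  show "blk N B \<in> carrier_mat (N*2) (N*2)" by simp
  fix v :: "complex vec" assume v: "v \<in> carrier_vec (N*2)"
  let ?t = "\<lambda>a. cnj (v $ (a*2)) * B a 0 0 * v $ (a*2) + cnj (v $ (a*2)) * B a 0 1 * v $ (a*2+1)
     + cnj (v $ (a*2+1)) * B a 1 0 * v $ (a*2) + cnj (v $ (a*2+1)) * B a 1 1 * v $ (a*2+1)"
  have q: "qf (N*2) (blk N B) v = (\<Sum>a<N. ?t a)"
    unfolding qf_blk by (intro sum.cong refl) (simp add: sum2 algebra_simps)
  have "\<And>a. a < N \<Longrightarrow> Im (?t a) = 0 \<and> Re (?t a) \<ge> 0" using assms by blast
  then show "Im (qf (N*2) (blk N B) v) = 0" "Re (qf (N*2) (blk N B) v) \<ge> 0"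
    unfolding q by (auto simp: Im_sum Re_sum intro!: sum_nonneg)
qed

definition w :: "nat \<Rightarrow> nat \<Rightarrow> complex" where
  "w d a = cis (2 * pi * real a / real d)"

definition pblk :: "nat \<Rightarrow> nat \<Rightarrow> nat \<Rightarrow> nat \<Rightarrow> complex" where
  "pblk d a r s = (if r = s then 1/2 else if r = 0 then cnj (w d a) / 2 else w d a / 2)"

definition tau :: "nat \<Rightarrow> nat \<Rightarrow> complex mat" where
  "tau d1 d2 = blk (d1*d2) (\<lambda>a r s. pblk d1 (a div d2) r s / of_nat (d1*d2))"

lemma w_cnj: "cnj (w d a) * w d a = 1"
  by (simp add: w_def cis_cnj cis_mult)

lemma sum_w: assumes "d \<ge> 2" shows "(\<Sum>a<d. w d a) = 0"
proof -
  define \<omega> where "\<omega> = cis (2 * pi / real d)"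
  have ne: "\<omega> \<noteq> 1"
  proof
    assume "\<omega> = 1"
    with assms obtain k :: int where "2 * pi / real d = 2 * pi * of_int k"
      by (auto simp: \<omega>_def complex_eq_iff cos_one_2pi_int)
    with assms have "real d * of_int k = 1" by (simp add: field_simps)
    also have "real d * of_int k = of_int (int d * k)" by simp
    also have "1 = (of_int 1 :: real)" by simp
    also note of_int_eq_iff
    finally show False using assms by (auto simp: zmult_eq_1_iff)
  qed
  have "(\<Sum>a<d. w d a) = (\<Sum>a<d. \<omega> ^ a)"
    by (intro sum.cong refl) (auto simp: \<omega>_def w_def DeMoivre mult_ac)
  also have "\<dots> = (\<omega> ^ d - 1) / (\<omega> - 1)"
    using ne by (subst geometric_sum) auto
  also have "\<omega> ^ d - 1 = cis (2 * pi) - 1" using assms by (auto simp: \<omega>_def DeMoivre)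
  also have "\<dots> = 0" by (simp add: complex_eq_iff)
  finally show ?thesis by simp
qed

lemma sum_cnj_w: assumes "d \<ge> 2" shows "(\<Sum>a<d. cnj (w d a)) = 0"
  using sum_w[OF assms] by (metis cnj_sum complex_cnj_zero)

lemma form_nonneg:
  assumes "Q = complex_of_real t" "t \<ge> 0" shows "Im Q = 0 \<and> Re Q \<ge> 0"
  using assms by simp

lemma form1:
  fixes x y u :: complex and c :: real
  assumes u: "cnj u * u = 1"
  shows "cnj x * (1/2 / of_real c) * x + cnj x * (cnj u / 2 / of_real c) * y + cnj y * (u / 2 / of_real c) * x + cnj y * (1/2 / of_real c) * y
        = complex_of_real ((cmod (x + cnj u * y))\<^sup>2 / (2*c))"
proof -
  have "complex_of_real ((cmod (x + cnj u * y))\<^sup>2) = (x + cnj u * y) * cnj (x + cnj u * y)"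
    by (rule complex_norm_square)
  also have "\<dots> = x * cnj x + x * u * cnj y + cnj u * y * cnj x + (cnj u * u) * y * cnj y"
    by (simp add: algebra_simps)
  also have "\<dots> = x * cnj x + x * u * cnj y + cnj u * y * cnj x + y * cnj y"
    using u by simp
  finally have e: "complex_of_real ((cmod (x + cnj u * y))\<^sup>2) = x * cnj x + x * u * cnj y + cnj u * y * cnj x + y * cnj y" .
  have f: "complex_of_real ((cmod (x + cnj u * y))\<^sup>2 / (2*c)) = complex_of_real ((cmod (x + cnj u * y))\<^sup>2) / (2 * complex_of_real c)"
    by simp
  show ?thesis
  proof (cases "c = 0")
    case True then show ?thesis by simp
  next
    case False
    then have c: "complex_of_real c \<noteq> 0" by simp
    show ?thesis unfolding f e using c by (simp add: field_simps)
  qed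
qed

lemma form2:
  fixes x y u :: complex and c :: real
  assumes u: "cnj u * u = 1"
  shows "cnj x * (1/2 / of_real c) * x + cnj x * (- (cnj u / 2 / of_real c)) * y + cnj y * (- (u / 2 / of_real c)) * x + cnj y * (1/2 / of_real c) * y
        = complex_of_real ((cmod (x - cnj u * y))\<^sup>2 / (2*c))"
  using form1[OF u, where x=x and y="-y" and c=c] by simp

lemma psd_tau: "psd (d1*d2*2) (tau d1 d2)"
  unfolding tau_def
proof (rule psd_blk)
  fix a x y
  let ?u = "w d1 (a div d2)"
  have "cnj x * (pblk d1 (a div d2) 0 0 / of_nat (d1*d2)) * x + cnj x * (pblk d1 (a div d2) 0 1 / of_nat (d1*d2)) * y
     + cnj y * (pblk d1 (a div d2) 1 0 / of_nat (d1*d2)) * x + cnj y * (pblk d1 (a div d2) 1 1 / of_nat (d1*d2)) * y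
     = complex_of_real ((cmod (x + cnj ?u * y))\<^sup>2 / (2*real (d1*d2)))"
    using form1[where x=x and y=y and u="w d1 (a div d2)" and c="real (d1*d2)", OF w_cnj] by (simp add: pblk_def)
  then show "Im (cnj x * (pblk d1 (a div d2) 0 0 / of_nat (d1*d2)) * x + cnj x * (pblk d1 (a div d2) 0 1 / of_nat (d1*d2)) * y
     + cnj y * (pblk d1 (a div d2) 1 0 / of_nat (d1*d2)) * x + cnj y * (pblk d1 (a div d2) 1 1 / of_nat (d1*d2)) * y) = 0 \<and>
     Re (cnj x * (pblk d1 (a div d2) 0 0 / of_nat (d1*d2)) * x + cnj x * (pblk d1 (a div d2) 0 1 / of_nat (d1*d2)) * y
     + cnj y * (pblk d1 (a div d2) 1 0 / of_nat (d1*d2)) * x + cnj y * (pblk d1 (a div d2) 1 1 / of_nat (d1*d2)) * y) \<ge> 0"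
    by simp
qed

lemma psd_tau_compl: "psd (d1*d2*2) ((1 / of_nat (d1*d2)) \<cdot>\<^sub>m 1\<^sub>m (d1*d2*2) - tau d1 d2)"
  unfolding tau_def blk_smult_one blk_minus
proof (rule psd_blk)
  fix a x y
  let ?u = "w d1 (a div d2)"
  let ?B = "\<lambda>r s. (if r = s then 1 / of_nat (d1*d2) else 0) - pblk d1 (a div d2) r s / of_nat (d1*d2) :: complex"
  have "cnj x * ?B 0 0 * x + cnj x * ?B 0 1 * y + cnj y * ?B 1 0 * x + cnj y * ?B 1 1 * y
     = complex_of_real ((cmod (x - cnj ?u * y))\<^sup>2 / (2*real (d1*d2)))"
    using form2[where x=x and y=y and u="w d1 (a div d2)" and c="real (d1*d2)", OF w_cnj] by (simp add: pblk_def)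
  then show "Im (cnj x * ?B 0 0 * x + cnj x * ?B 0 1 * y + cnj y * ?B 1 0 * x + cnj y * ?B 1 1 * y) = 0 \<and>
     Re (cnj x * ?B 0 0 * x + cnj x * ?B 0 1 * y + cnj y * ?B 1 0 * x + cnj y * ?B 1 1 * y) \<ge> 0"
    by simp
qed

lemma sum_pblk: assumes "d \<ge> 2" "r < 2" "s < 2"
  shows "(\<Sum>a<d. pblk d a r s) = (if r = s then of_nat d / 2 else 0)"
proof -
  have "r = s \<or> (r = 0 \<and> s = 1) \<or> (r = 1 \<and> s = 0)" using assms by auto
  then show ?thesis
  proof (elim disjE conjE)
    assume "r = s" then show ?thesis by (simp add: pblk_def)
  next
    assume "r = 0" "s = 1"
    then show ?thesis using sum_cnj_w[OF assms(1)] by (simp add: pblk_def sum_divide_distrib[symmetric])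
  next
    assume "r = 1" "s = 0"
    then show ?thesis using sum_w[OF assms(1)] by (simp add: pblk_def sum_divide_distrib[symmetric])
  qed
qed

lemma mul_lt: "x < (d1::nat) \<Longrightarrow> y < d2 \<Longrightarrow> x*d2+y < d1*d2"
proof -
  assume x: "x < d1" and y: "y < d2"
  have "x*d2+y < x*d2 + d2" using y by simp
  also have "\<dots> = (Suc x)*d2" by simp
  also have "\<dots> \<le> d1*d2" using x by (intro mult_right_mono) auto
  finally show ?thesis .
qed

lemma tau_index: assumes "k < d1*d2" "e < 2" "e' < 2"
  shows "tau d1 d2 $$ (k*2+e, k*2+e') = pblk d1 (k div d2) e e' / of_nat (d1*d2)"
proof -
  have "k*2+e < d1*d2*2" "k*2+e' < d1*d2*2" using assms by (auto intro: idx_lt)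
  then show ?thesis unfolding tau_def using assms by (simp add: blk_index idx2)
qed

lemma ptrace_tau: assumes d1: "d1 \<ge> 2" and d2: "d2 \<ge> 1"
  shows "ptrace_A (d1*d2) 2 (tau d1 d2) = (1/2) \<cdot>\<^sub>m 1\<^sub>m 2"
proof (rule eq_matI)
  fix e e' assume e: "e < dim_row ((1/2) \<cdot>\<^sub>m 1\<^sub>m 2 :: complex mat)" and e': "e' < dim_col ((1/2) \<cdot>\<^sub>m 1\<^sub>m 2 :: complex mat)"
  have e2: "e < 2" "e' < 2" using e e' by auto
  have "ptrace_A (d1*d2) 2 (tau d1 d2) $$ (e,e') = (\<Sum>a<d1*d2. tau d1 d2 $$ (a*2+e, a*2+e'))"
    using e2 by (simp add: ptrace_A_def)
  also have "\<dots> = (\<Sum>x<d1. \<Sum>y<d2. tau d1 d2 $$ ((x*d2+y)*2+e, (x*d2+y)*2+e'))"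
    by (rule sum_split)
  also have "\<dots> = (\<Sum>x<d1. \<Sum>y<d2. pblk d1 x e e' / of_nat (d1*d2))"
  proof (intro sum.cong refl)
    fix x y assume x: "x \<in> {..<d1}" and y: "y \<in> {..<d2}"
    have xy: "x*d2+y < d1*d2" using x y mul_lt by auto
    have dv: "(x*d2+y) div d2 = x" using y by auto
    show "tau d1 d2 $$ ((x*d2+y)*2+e, (x*d2+y)*2+e') = pblk d1 x e e' / of_nat (d1*d2)"
      using tau_index[OF xy e2] dv by simp
  qed
  also have "\<dots> = of_nat d2 * (\<Sum>x<d1. pblk d1 x e e') / of_nat (d1*d2)"
    by (simp add: sum_distrib_left sum_divide_distrib)
  also have "\<dots> = ((1/2) \<cdot>\<^sub>m 1\<^sub>m 2 :: complex mat) $$ (e,e')"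
    using e2 d1 d2 by (simp add: sum_pblk)
  finally show "ptrace_A (d1*d2) 2 (tau d1 d2) $$ (e,e') = ((1/2) \<cdot>\<^sub>m 1\<^sub>m 2 :: complex mat) $$ (e,e')" .
qed (auto simp: ptrace_A_def)

lemma Tmap_tau: assumes d1: "d1 \<ge> 2" and d2: "d2 \<ge> 1"
  shows "T_map d1 d2 2 (tau d1 d2) = blk d1 (\<lambda>a r s. pblk d1 a r s / of_nat d1)"
proof (rule eq_matI)
  fix i j assume i: "i < dim_row (blk d1 (\<lambda>a r s. pblk d1 a r s / of_nat d1))" and j: "j < dim_col (blk d1 (\<lambda>a r s. pblk d1 a r s / of_nat d1))"
  have i1: "i < d1*2" and j1: "j < d1*2" using i j by auto
  have id: "i div 2 < d1" "j div 2 < d1" "i mod 2 < 2" "j mod 2 < 2" using i1 j1 by auto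
  show "T_map d1 d2 2 (tau d1 d2) $$ (i,j) = blk d1 (\<lambda>a r s. pblk d1 a r s / of_nat d1) $$ (i,j)"
  proof (cases "i div 2 = j div 2")
    case False then show ?thesis using i1 j1 by (simp add: T_map_def blk_index)
  next
    case True
    have "T_map d1 d2 2 (tau d1 d2) $$ (i,j) = (\<Sum>a2<d2. tau d1 d2 $$ (((i div 2)*d2 + a2)*2 + i mod 2, ((j div 2)*d2 + a2)*2 + j mod 2))"
      using i1 j1 True by (simp add: T_map_def)
    also have "\<dots> = (\<Sum>a2<d2. pblk d1 (i div 2) (i mod 2) (j mod 2) / of_nat (d1*d2))"
    proof (intro sum.cong refl)
      fix y assume y: "y \<in> {..<d2}"
      have xy: "(i div 2)*d2+y < d1*d2" using id y mul_lt by auto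
      have dv: "((i div 2)*d2+y) div d2 = i div 2" using y by auto
      have "tau d1 d2 $$ (((i div 2)*d2 + y)*2 + i mod 2, ((i div 2)*d2 + y)*2 + j mod 2) = pblk d1 (i div 2) (i mod 2) (j mod 2) / of_nat (d1*d2)"
        using tau_index[OF xy id(3,4)] dv by simp
      then show "tau d1 d2 $$ (((i div 2)*d2 + y)*2 + i mod 2, ((j div 2)*d2 + y)*2 + j mod 2) = pblk d1 (i div 2) (i mod 2) (j mod 2) / of_nat (d1*d2)"
        using True by simp
    qed
    also have "\<dots> = pblk d1 (i div 2) (i mod 2) (j mod 2) / of_nat d1"
      using d2 by (simp add: field_simps)
    also have "\<dots> = blk d1 (\<lambda>a r s. pblk d1 a r s / of_nat d1) $$ (i,j)"
      using i1 j1 True by (simp add: blk_index)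
    finally show ?thesis .
  qed
qed (auto simp: T_map_def)

lemma kron_uniform: assumes "d1 > 0"
  shows "kron ((1 / of_nat d1) \<cdot>\<^sub>m 1\<^sub>m d1) ((1/2) \<cdot>\<^sub>m 1\<^sub>m 2) = blk d1 (\<lambda>a r s. if r = s then 1 / (2 * of_nat d1) else 0)"
proof (rule eq_matI)
  fix i j assume i: "i < dim_row (blk d1 (\<lambda>a r s. if r = s then 1 / (2 * of_nat d1) else (0::complex)))"
    and j: "j < dim_col (blk d1 (\<lambda>a r s. if r = s then 1 / (2 * of_nat d1) else (0::complex)))"
  have i1: "i < d1*2" and j1: "j < d1*2" using i j by auto
  have id: "i div 2 < d1" "j div 2 < d1" "i mod 2 < 2" "j mod 2 < 2" using i1 j1 by auto
  show "kron ((1 / of_nat d1) \<cdot>\<^sub>m 1\<^sub>m d1) ((1/2) \<cdot>\<^sub>m 1\<^sub>m 2) $$ (i,j) = blk d1 (\<lambda>a r s. if r = s then 1 / (2 * of_nat d1) else 0) $$ (i,j)"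
    using i1 j1 id by (simp add: kron_index blk_index)
qed auto

lemma cnj_div_sq: "cnj u * u = 1 \<Longrightarrow> cnj (u / c) * (u / c) = 1 / (cnj c * c)"
  by (simp add: divide_inverse mult_ac)

lemma tn_one: assumes d1: "d1 \<ge> 2" and d2: "d2 \<ge> 1"
  shows "trace_norm (T_map d1 d2 2 (tau d1 d2) - kron ((1 / of_nat d1) \<cdot>\<^sub>m 1\<^sub>m d1) (ptrace_A (d1*d2) 2 (tau d1 d2))) = 1"
proof -
  define Q where "Q = (\<lambda>a r s. pblk d1 a r s / of_nat d1 - (if r = s then 1 / (2 * of_nat d1) else (0::complex)))"
  have X: "T_map d1 d2 2 (tau d1 d2) - kron ((1 / of_nat d1) \<cdot>\<^sub>m 1\<^sub>m d1) (ptrace_A (d1*d2) 2 (tau d1 d2)) = blk d1 Q"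
  proof -
    have d1p: "0 < d1" using d1 by simp
    show ?thesis
      unfolding Tmap_tau[OF d1 d2] ptrace_tau[OF d1 d2] kron_uniform[OF d1p]
      by (simp add: blk_minus Q_def)
  qed
  define c :: real where "c = 1 / (4 * (real d1)\<^sup>2)"
  have cc: "cnj (2 * of_nat d1) * (2 * of_nat d1) = (complex_of_real (4 * (real d1)\<^sup>2))"
    by (simp add: power2_eq_square)
  have "adj (blk d1 Q) * blk d1 Q = blk d1 (\<lambda>a r s. \<Sum>y<2. cnj (Q a y r) * Q a y s)"
    by (rule blk_adj_mult)
  also have "\<dots> = blk d1 (\<lambda>a r s. if r = s then complex_of_real c else 0)"
  proof (rule blk_cong)
    fix a r s :: nat assume r: "r < 2" and s: "s < 2"
    have q01: "Q a 0 (Suc 0) = cnj (w d1 a) / (2 * of_nat d1)" and q10: "Q a (Suc 0) 0 = w d1 a / (2 * of_nat d1)"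
      and q00: "Q a 0 0 = 0" and q11: "Q a (Suc 0) (Suc 0) = 0"
      by (simp_all add: Q_def pblk_def)
    have w1: "cnj (w d1 a / (2 * of_nat d1)) * (w d1 a / (2 * of_nat d1)) = complex_of_real c"
      using cnj_div_sq[OF w_cnj, of d1 a "2 * of_nat d1"] cc by (simp add: c_def)
    have w2: "cnj (cnj (w d1 a) / (2 * of_nat d1)) * (cnj (w d1 a) / (2 * of_nat d1)) = complex_of_real c"
      using cnj_div_sq[of "cnj (w d1 a)" "2 * of_nat d1"] w_cnj[of d1 a] cc by (simp add: c_def mult.commute)
    have cval: "complex_of_real c = 1 / (4 * (of_nat d1 * of_nat d1))" by (simp add: c_def power2_eq_square)
    have wc: "cnj (w d1 a) * w d1 a = 1" "w d1 a * cnj (w d1 a) = 1" using w_cnj[of d1 a] by (simp_all add: mult.commute)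
    have "r = 0 \<or> r = 1" "s = 0 \<or> s = 1" using r s by auto
    then show "(\<Sum>y<2. cnj (Q a y r) * Q a y s) = (if r = s then complex_of_real c else 0)"
      by (elim disjE) (simp_all add: sum2 q01 q10 q00 q11 wc cval)
  qed
  also have "\<dots> = complex_of_real c \<cdot>\<^sub>m 1\<^sub>m (d1*2)"
    by (rule blk_smult_one[symmetric])
  finally have e: "adj (blk d1 Q) * blk d1 Q = complex_of_real c \<cdot>\<^sub>m 1\<^sub>m (d1*2)" .
  have "trace_norm (blk d1 Q) = real (d1*2) * sqrt c"
    by (rule trace_norm_scalar[OF blk_carrier _ _ e]) (use d1 in \<open>auto simp: c_def\<close>)
  also have "\<dots> = 1"
  proof -
    have "sqrt c = 1 / (2 * real d1)" unfolding c_def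
      by (simp add: real_sqrt_divide real_sqrt_mult power2_eq_square)
    then show ?thesis using d1 by simp
  qed
  finally show ?thesis unfolding X .
qed

definition Emat :: "nat \<Rightarrow> nat \<Rightarrow> complex mat" where
  "Emat p q = mat 2 2 (\<lambda>(r,s). if r = p \<and> s = q then 1 else 0)"

lemma Emat_carrier[simp]: "Emat p q \<in> carrier_mat 2 2" by (simp add: Emat_def)
lemma Emat_dims[simp]: "dim_row (Emat p q) = 2" "dim_col (Emat p q) = 2" by (simp_all add: Emat_def)

lemma kron_Emat: "kron (1\<^sub>m N) (Emat p q) = blk N (\<lambda>a r s. if r = p \<and> s = q then 1 else 0)"
proof (rule eq_matI)
  fix i j assume i: "i < dim_row (blk N (\<lambda>a r s. if r = p \<and> s = q then 1 else (0::complex)))"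
    and j: "j < dim_col (blk N (\<lambda>a r s. if r = p \<and> s = q then 1 else (0::complex)))"
  have i1: "i < N*2" and j1: "j < N*2" using i j by auto
  have id: "i div 2 < N" "j div 2 < N" "i mod 2 < 2" "j mod 2 < 2" using i1 j1 by auto
  show "kron (1\<^sub>m N) (Emat p q) $$ (i,j) = blk N (\<lambda>a r s. if r = p \<and> s = q then 1 else 0) $$ (i,j)"
    using i1 j1 id by (simp add: kron_index blk_index Emat_def)
qed (auto simp: Emat_def)

lemma kron_one_half: "kron (1\<^sub>m N) (c \<cdot>\<^sub>m 1\<^sub>m 2) = c \<cdot>\<^sub>m 1\<^sub>m (N*2)"
proof -
  have "kron (1\<^sub>m N) (c \<cdot>\<^sub>m 1\<^sub>m 2) = blk N (\<lambda>a r s. if r = s then c else 0)"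
  proof (rule eq_matI)
    fix i j assume i: "i < dim_row (blk N (\<lambda>a r s. if r = s then c else 0))"
      and j: "j < dim_col (blk N (\<lambda>a r s. if r = s then c else 0))"
    have i1: "i < N*2" and j1: "j < N*2" using i j by auto
    have id: "i div 2 < N" "j div 2 < N" "i mod 2 < 2" "j mod 2 < 2" using i1 j1 by auto
    show "kron (1\<^sub>m N) (c \<cdot>\<^sub>m 1\<^sub>m 2) $$ (i,j) = blk N (\<lambda>a r s. if r = s then c else 0) $$ (i,j)"
      using i1 j1 id by (simp add: kron_index blk_index)
  qed auto
  then show ?thesis by (simp add: blk_smult_one)
qed

lemma ptrace_tr: assumes M: "M \<in> carrier_mat (N*2) (N*2)" and e: "e < 2" "e' < 2"
  shows "ptrace_A N 2 M $$ (e,e') = tr (kron (1\<^sub>m N) (Emat e' e) * M)"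
proof -
  let ?K = "kron (1\<^sub>m N) (Emat e' e)"
  have K: "?K = blk N (\<lambda>a r s. if r = e' \<and> s = e then 1 else 0)" by (rule kron_Emat)
  have "tr (?K * M) = (\<Sum>i<N*2. \<Sum>k<N*2. ?K $$ (i,k) * M $$ (k,i))"
    unfolding tr_def using M K by (intro sum.cong refl) (auto simp: scalar_prod_def lessThan_atLeast0 intro!: sum.cong)
  also have "\<dots> = (\<Sum>a<N. \<Sum>r<2. \<Sum>k<N*2. ?K $$ (a*2+r,k) * M $$ (k,a*2+r))"
    by (rule sum_split)
  also have "\<dots> = (\<Sum>a<N. \<Sum>r<2. \<Sum>s<2. (if r = e' \<and> s = e then 1 else 0) * M $$ (a*2+s,a*2+r))"
    unfolding K
    apply (rule sum.cong[OF refl])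
    apply (rule sum.cong[OF refl])
    subgoal for a r using blk_row_sum[of a N r "\<lambda>x j. x * M $$ (j, a*2+r)"] by simp
    done
  also have "\<dots> = (\<Sum>a<N. M $$ (a*2+e, a*2+e'))"
  proof -
    have "e = 0 \<or> e = 1" "e' = 0 \<or> e' = 1" using e by auto
    then show ?thesis by (elim disjE) (simp_all add: sum2)
  qed
  also have "\<dots> = ptrace_A N 2 M $$ (e,e')"
    using e by (simp add: ptrace_A_def)
  finally show ?thesis by simp
qed

lemma unitary_kron:
  assumes U: "unitary d U"
  shows "kron U (1\<^sub>m 2) \<in> carrier_mat (d*2) (d*2)"
    "kron U (1\<^sub>m 2) * adj (kron U (1\<^sub>m 2)) = 1\<^sub>m (d*2)"
    "adj (kron U (1\<^sub>m 2)) * kron U (1\<^sub>m 2) = 1\<^sub>m (d*2)"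
proof -
  have Uc: "U \<in> carrier_mat d d" and u1: "U * adj U = 1\<^sub>m d" and u2: "adj U * U = 1\<^sub>m d"
    using U by (auto simp: unitary_def)
  show "kron U (1\<^sub>m 2) \<in> carrier_mat (d*2) (d*2)" using Uc kron_carrier[of U "1\<^sub>m 2"] by simp
  show "kron U (1\<^sub>m 2) * adj (kron U (1\<^sub>m 2)) = 1\<^sub>m (d*2)"
    unfolding adj_kron adj_one
    by (subst kron_mult[of _ d d _ 2 2 _ d _ 2]) (use Uc in \<open>auto simp: u1 kron_one\<close>)
  show "adj (kron U (1\<^sub>m 2)) * kron U (1\<^sub>m 2) = 1\<^sub>m (d*2)"
    unfolding adj_kron adj_one
    by (subst kron_mult[of _ d d _ 2 2 _ d _ 2]) (use Uc in \<open>auto simp: u2 kron_one\<close>)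
qed

lemma ptrace_conj:
  assumes U: "unitary N U" and M: "M \<in> carrier_mat (N*2) (N*2)"
  shows "ptrace_A N 2 (adj (kron U (1\<^sub>m 2)) * M * kron U (1\<^sub>m 2)) = ptrace_A N 2 M"
proof (rule eq_matI)
  let ?V = "kron U (1\<^sub>m 2)"
  have V: "?V \<in> carrier_mat (N*2) (N*2)" and VV: "?V * adj ?V = 1\<^sub>m (N*2)"
    using unitary_kron[OF U] by auto
  have aV: "adj ?V \<in> carrier_mat (N*2) (N*2)" using V by simp
  have Uc: "U \<in> carrier_mat N N" and u1: "U * adj U = 1\<^sub>m N" using U by (auto simp: unitary_def)
  fix e e' assume e: "e < dim_row (ptrace_A N 2 M)" and e': "e' < dim_col (ptrace_A N 2 M)"
  have e2: "e < 2" "e' < 2" using e e' by (auto simp: ptrace_A_def)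
  let ?K = "kron (1\<^sub>m N) (Emat e' e)"
  have K: "?K \<in> carrier_mat (N*2) (N*2)" using kron_carrier[of "1\<^sub>m N" "Emat e' e"] by simp
  have VKV: "?V * ?K * adj ?V = ?K"
  proof -
    have "?V * ?K = kron (U * 1\<^sub>m N) (1\<^sub>m 2 * Emat e' e)"
      by (rule kron_mult[of _ N N _ 2 2 _ N _ 2]) (use Uc in auto)
    also have "\<dots> = kron U (Emat e' e)" using Uc by simp
    finally have "?V * ?K * adj ?V = kron U (Emat e' e) * kron (adj U) (1\<^sub>m 2)"
      by (simp add: adj_kron)
    also have "\<dots> = kron (U * adj U) (Emat e' e * 1\<^sub>m 2)"
      by (rule kron_mult[of _ N N _ 2 2 _ N _ 2]) (use Uc in auto)
    also have "\<dots> = ?K" using u1 by simp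
    finally show ?thesis .
  qed
  have C: "adj ?V * M * ?V \<in> carrier_mat (N*2) (N*2)" using mult_carrier_mat[OF mult_carrier_mat[OF aV M] V] .
  have "?K * (adj ?V * M * ?V) = (?K * (adj ?V * M)) * ?V"
    using assoc_mult_mat[OF K mult_carrier_mat[OF aV M] V] by simp
  also have "?K * (adj ?V * M) = ?K * adj ?V * M"
    using assoc_mult_mat[OF K aV M] by simp
  finally have "tr (?K * (adj ?V * M * ?V)) = tr ((?K * adj ?V * M) * ?V)" by simp
  also have "\<dots> = tr (?V * (?K * adj ?V * M))"
    by (rule tr_comm[of _ "N*2" "N*2"]) (use K aV M V in auto)
  also have "?V * (?K * adj ?V * M) = (?V * ?K * adj ?V) * M"
  proof -
    have "?V * (?K * adj ?V * M) = (?V * (?K * adj ?V)) * M"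
      using assoc_mult_mat[OF V mult_carrier_mat[OF K aV] M] by simp
    also have "?V * (?K * adj ?V) = ?V * ?K * adj ?V"
      using assoc_mult_mat[OF V K aV] by simp
    finally show ?thesis .
  qed
  also have "\<dots> = ?K * M" unfolding VKV ..
  finally have "tr (?K * (adj ?V * M * ?V)) = tr (?K * M)" .
  then show "ptrace_A N 2 (adj ?V * M * ?V) $$ (e,e') = ptrace_A N 2 M $$ (e,e')"
    using ptrace_tr[OF C e2] ptrace_tr[OF M e2] by simp
qed (auto simp: ptrace_A_def)

lemma tr_tau: assumes "d1 \<ge> 1" "d2 \<ge> 1" shows "tr (tau d1 d2) = 1"
proof -
  have "tr (tau d1 d2) = (\<Sum>i<d1*d2*2. tau d1 d2 $$ (i,i))" by (simp add: tr_def tau_def)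
  also have "\<dots> = (\<Sum>k<d1*d2. \<Sum>e<2. tau d1 d2 $$ (k*2+e,k*2+e))" by (rule sum_split)
  also have "\<dots> = (\<Sum>k<d1*d2. 1 / of_nat (d1*d2))"
  proof (intro sum.cong refl)
    fix k assume k: "k \<in> {..<d1*d2}"
    then show "(\<Sum>e<2. tau d1 d2 $$ (k*2+e,k*2+e)) = 1 / of_nat (d1*d2)"
      using tau_index[of k d1 d2 0 0] tau_index[of k d1 d2 1 1] by (simp add: sum2 pblk_def)
  qed
  also have "\<dots> = 1" using assms by simp
  finally show ?thesis .
qed

lemma smult_smult_mat: "a \<cdot>\<^sub>m (b \<cdot>\<^sub>m A) = (a * b :: complex) \<cdot>\<^sub>m A"
  by (rule eq_matI) auto

lemma density_half: "density 2 ((1/2) \<cdot>\<^sub>m 1\<^sub>m 2)"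
proof -
  have e: "((1/2)::complex) \<cdot>\<^sub>m 1\<^sub>m 2 = blk 1 (\<lambda>a r s. if r = s then 1/2 else 0)"
    using blk_smult_one[of "1/2::complex" 1] by simp
  have "psd (1*2) (blk 1 (\<lambda>a r s. if r = s then (1/2::complex) else 0))"
  proof (rule psd_blk)
    fix a and x y :: complex
    have "cnj x * x = complex_of_real ((cmod x)\<^sup>2)" "cnj y * y = complex_of_real ((cmod y)\<^sup>2)"
      by (simp_all add: cnj_mult_self)
    then show "Im (cnj x * (if (0::nat) = 0 then 1/2 else 0) * x + cnj x * (if (0::nat) = 1 then 1/2 else 0) * y + cnj y * (if (1::nat) = 0 then 1/2 else 0) * x + cnj y * (if (1::nat) = 1 then 1/2 else 0) * y) = 0 \<and>
      Re (cnj x * (if (0::nat) = 0 then 1/2 else 0) * x + cnj x * (if (0::nat) = 1 then 1/2 else 0) * y + cnj y * (if (1::nat) = 0 then 1/2 else 0) * x + cnj y * (if (1::nat) = 1 then 1/2 else 0) * y) \<ge> 0"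
      by (simp add: mult.commute[of _ "1/2"] mult.assoc)
  qed
  moreover have "tr (((1/2)::complex) \<cdot>\<^sub>m 1\<^sub>m 2) = 1" by (simp add: tr_def sum2)
  ultimately show ?thesis unfolding density_def e by simp
qed

theorem proposition7:
  fixes d1 d2 :: nat and k \<epsilon> :: real and Us :: "complex mat list"
  assumes "d1 \<ge> 2" and "d2 \<ge> 1"
    and "qc_extractor d1 d2 k \<epsilon> Us"
    and "k \<le> log 2 (real (d1 * d2)) - 1"
  shows "real (length Us) * \<epsilon> \<ge> 1"
proof -
  note d1 = assms(1) and d2 = assms(2)
  define dA where "dA = d1 * d2"
  have dApos: "dA > 0" using d1 d2 by (simp add: dA_def)
  have ne: "Us \<noteq> []" and unit: "\<forall>U\<in>set Us. unitary (d1*d2) U"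
    and ext: "\<forall>(dE::nat) \<rho>. density (d1 * d2 * dE) \<rho> \<and> hmin (d1 * d2) dE \<rho> \<ge> k \<longrightarrow>
        (1 / real (length Us)) *
          (\<Sum>U \<leftarrow> Us. trace_norm
             (T_map d1 d2 dE (kron U (1\<^sub>m dE) * \<rho> * adj (kron U (1\<^sub>m dE)))
              - kron ((1 / of_nat d1) \<cdot>\<^sub>m 1\<^sub>m d1) (ptrace_A (d1 * d2) dE \<rho>)))
        \<le> \<epsilon>"
    using assms(3) unfolding qc_extractor_def by auto
  define U where "U = hd Us"
  have Uin: "U \<in> set Us" using ne by (simp add: U_def)
  have Uu: "unitary dA U" using unit Uin by (simp add: dA_def)
  define V where "V = kron U (1\<^sub>m 2)"
  have V: "V \<in> carrier_mat (dA*2) (dA*2)" and VaV: "V * adj V = 1\<^sub>m (dA*2)" and aVV: "adj V * V = 1\<^sub>m (dA*2)"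
    using unitary_kron[OF Uu] by (simp_all add: V_def)
  have aV: "adj V \<in> carrier_mat (dA*2) (dA*2)" using V by simp
  have V': "V \<in> carrier_mat (d1*d2*2) (d1*d2*2)" using V by (simp add: dA_def)
  define T where "T = tau d1 d2"
  have Tc: "T \<in> carrier_mat (dA*2) (dA*2)" by (simp add: T_def tau_def dA_def)
  define \<rho> where "\<rho> = adj V * T * V"
  have \<rho>c: "\<rho> \<in> carrier_mat (dA*2) (dA*2)" unfolding \<rho>_def using mult_carrier_mat[OF mult_carrier_mat[OF aV Tc] V] .
  have tr\<rho>: "tr \<rho> = 1"
  proof -
    have "tr \<rho> = tr (adj V * (T * V))" unfolding \<rho>_def using assoc_mult_mat[OF aV Tc V] by simp
    also have "\<dots> = tr ((T * V) * adj V)" by (rule tr_comm[of _ "dA*2" "dA*2"]) (use aV Tc V in auto)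
    also have "(T * V) * adj V = T" using assoc_mult_mat[OF Tc V aV] VaV Tc by simp
    finally show ?thesis using tr_tau[of d1 d2] d1 d2 by (simp add: T_def)
  qed
  have dens: "density (d1*d2*2) \<rho>"
    unfolding density_def using psd_conj[OF psd_tau V'] tr\<rho> by (simp add: \<rho>_def T_def dA_def)
  define S where "S = {lam. \<exists>\<sigma>. density 2 \<sigma> \<and>
      psd (dA * 2) (complex_of_real (2 powr (- lam)) \<cdot>\<^sub>m kron (1\<^sub>m dA) \<sigma> - \<rho>)}"
  have hS: "hmin dA 2 \<rho> = Sup S" by (simp add: hmin_def S_def)
  define lam0 where "lam0 = log 2 (real dA) - 1"
  have p0: "2 powr (- lam0) = 2 / real dA"
    using dApos by (simp add: lam0_def powr_diff[symmetric] powr_diff)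
  have lam0S: "lam0 \<in> S"
  proof -
    have "complex_of_real (2 powr (- lam0)) \<cdot>\<^sub>m kron (1\<^sub>m dA) ((1/2) \<cdot>\<^sub>m 1\<^sub>m 2) = (1 / of_nat dA) \<cdot>\<^sub>m 1\<^sub>m (dA*2)"
      unfolding kron_one_half smult_smult_mat p0 by simp
    moreover have "(1 / of_nat dA) \<cdot>\<^sub>m 1\<^sub>m (dA*2) - \<rho> = adj V * ((1 / of_nat dA) \<cdot>\<^sub>m 1\<^sub>m (dA*2) - T) * V"
    proof -
      have I: "(1 / of_nat dA :: complex) \<cdot>\<^sub>m 1\<^sub>m (dA*2) \<in> carrier_mat (dA*2) (dA*2)" by simp
      have "adj V * ((1 / of_nat dA) \<cdot>\<^sub>m 1\<^sub>m (dA*2) - T) = adj V * ((1 / of_nat dA) \<cdot>\<^sub>m 1\<^sub>m (dA*2)) - adj V * T"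
        by (rule mult_minus_distrib_mat[OF aV I Tc])
      also have "adj V * ((1 / of_nat dA) \<cdot>\<^sub>m 1\<^sub>m (dA*2)) = (1 / of_nat dA) \<cdot>\<^sub>m adj V"
        using mult_smult_distrib[OF aV, of "1\<^sub>m (dA*2)" "dA*2" "1 / of_nat dA"] right_mult_one_mat[OF aV] by simp
      finally have "adj V * ((1 / of_nat dA) \<cdot>\<^sub>m 1\<^sub>m (dA*2) - T) * V = ((1 / of_nat dA) \<cdot>\<^sub>m adj V - adj V * T) * V"
        by simp
      also have "\<dots> = ((1 / of_nat dA) \<cdot>\<^sub>m adj V) * V - adj V * T * V"
        by (rule minus_mult_distrib_mat) (use aV Tc V in auto)
      also have "((1 / of_nat dA) \<cdot>\<^sub>m adj V) * V = (1 / of_nat dA) \<cdot>\<^sub>m 1\<^sub>m (dA*2)"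
        using mult_smult_assoc_mat[OF aV V] aVV by simp
      finally show ?thesis by (simp add: \<rho>_def)
    qed
    moreover have "psd (dA*2) (adj V * ((1 / of_nat dA) \<cdot>\<^sub>m 1\<^sub>m (dA*2) - T) * V)"
      using psd_conj[OF psd_tau_compl V'] by (simp add: T_def dA_def)
    ultimately show ?thesis unfolding S_def using density_half by auto
  qed
  have bdd: "bdd_above S"
  proof (rule bdd_aboveI)
    fix lam assume "lam \<in> S"
    then obtain \<sigma> where ds: "density 2 \<sigma>" and ps: "psd (dA * 2) (complex_of_real (2 powr (- lam)) \<cdot>\<^sub>m kron (1\<^sub>m dA) \<sigma> - \<rho>)"
      unfolding S_def by blast
    have \<sigma>c: "\<sigma> \<in> carrier_mat 2 2" and tr\<sigma>: "tr \<sigma> = 1" using ds by (auto simp: density_def psd_def)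
    have Kc: "kron (1\<^sub>m dA) \<sigma> \<in> carrier_mat (dA*2) (dA*2)" using \<sigma>c kron_carrier[of "1\<^sub>m dA" \<sigma>] by simp
    have Mc: "complex_of_real (2 powr (- lam)) \<cdot>\<^sub>m kron (1\<^sub>m dA) \<sigma> \<in> carrier_mat (dA*2) (dA*2)" using Kc by simp
    have "tr (complex_of_real (2 powr (- lam)) \<cdot>\<^sub>m kron (1\<^sub>m dA) \<sigma> - \<rho>) = complex_of_real (2 powr (- lam)) * (of_nat dA * tr \<sigma>) - tr \<rho>"
      unfolding tr_minus[OF Mc \<rho>c] tr_smult[OF Kc] tr_kron_one[OF \<sigma>c] ..
    then have "Re (complex_of_real (2 powr (- lam)) * (of_nat dA * tr \<sigma>) - tr \<rho>) \<ge> 0"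
      using psd_tr[OF ps] by simp
    then have g: "2 powr (- lam) * real dA \<ge> 1" using tr\<sigma> tr\<rho> by simp
    have "2 powr (- lam + log 2 (real dA)) = 2 powr (- lam) * 2 powr (log 2 (real dA))"
      by (rule powr_add)
    then have "2 powr (- lam) * real dA = 2 powr (- lam + log 2 (real dA))"
      using dApos by simp
    with g have "2 powr (- lam + log 2 (real dA)) \<ge> 1" by simp
    then have "\<not> (- lam + log 2 (real dA) < 0)" using powr_less_one[of 2 "- lam + log 2 (real dA)"] by force
    then show "lam \<le> log 2 (real dA)" by simp
  qed
  have hm: "hmin (d1*d2) 2 \<rho> \<ge> k"
  proof -
    have "lam0 \<le> Sup S" by (rule cSup_upper[OF lam0S bdd])
    then show ?thesis using hS assms(4) by (simp add: lam0_def dA_def)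
  qed
  let ?f = "\<lambda>U. trace_norm (T_map d1 d2 2 (kron U (1\<^sub>m 2) * \<rho> * adj (kron U (1\<^sub>m 2)))
              - kron ((1 / of_nat d1) \<cdot>\<^sub>m 1\<^sub>m d1) (ptrace_A (d1 * d2) 2 \<rho>))"
  have bound: "(1 / real (length Us)) * (\<Sum>U \<leftarrow> Us. ?f U) \<le> \<epsilon>"
    using ext dens hm by blast
  have fU: "?f U = 1"
  proof -
    have "V * \<rho> * adj V = T"
    proof -
      have "V * \<rho> = V * (adj V * (T * V))" unfolding \<rho>_def using assoc_mult_mat[OF aV Tc V] by simp
      also have "\<dots> = (V * adj V) * (T * V)" using assoc_mult_mat[OF V aV mult_carrier_mat[OF Tc V]] by simp
      also have "\<dots> = T * V" using VaV Tc V by simp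
      finally have "V * \<rho> * adj V = T * V * adj V" by simp
      also have "\<dots> = T" using assoc_mult_mat[OF Tc V aV] VaV Tc by simp
      finally show ?thesis .
    qed
    moreover have "ptrace_A (d1*d2) 2 \<rho> = ptrace_A (d1*d2) 2 T"
      unfolding \<rho>_def V_def using ptrace_conj[OF Uu Tc] by (simp add: dA_def)
    ultimately show ?thesis using tn_one[OF d1 d2] by (simp add: V_def T_def)
  qed
  have "(\<Sum>U \<leftarrow> Us. ?f U) \<ge> 1"
  proof -
    have Us: "Us = U # tl Us" using ne by (simp add: U_def)
    have "(\<Sum>U \<leftarrow> Us. ?f U) = ?f U + (\<Sum>U \<leftarrow> tl Us. ?f U)" by (subst Us) simp
    moreover have "(\<Sum>U \<leftarrow> tl Us. ?f U) \<ge> 0" by (intro sum_list_nonneg) (auto simp: trace_norm_nonneg)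
    ultimately show ?thesis using fU by simp
  qed
  moreover have L: "real (length Us) > 0" using ne by simp
  ultimately show ?thesis using bound
    by (simp add: field_simps)
qed

end
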